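(* Let $\boldsymbol{\lambda}=(\lambda_1,\dots,\lambda_n)$ be a vector of positive integers and let $(a_1,\dots,a_n,d)$ be a minimal generator of $M(\boldsymbol{\lambda})$ of type (3) or (4). Then $0\le a_i<\lambda_i$ for all $i=1,\dots,n$.
   Context: $M(\boldsymbol{\lambda})=\{(a_1,\dots,a_n,d)\in\mathbb{N}^{n+1}\mid a_1/\lambda_1+\cdots+a_n/\lambda_n\ge d\}$. A minimal generator of $M(\boldsymbol{\lambda})$ is a nonzero element that cannot be written as the sum of two nonzero elements of $M(\boldsymbol{\lambda})$. A minimal generator $(a_1,\dots,a_n,d)$ is of type (3) if $a_n=0$, $d>0$ and $a_ia_j>0$ for some $1\le i<j<n$; it is of type (4) if $d>0$ and $a_ia_n>0$ for some $1\le i<n$. *)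

theory Defs
  imports Complex_Main
begin

text \<open>Vectors in N^(n+1) are represented as pairs (a, d) with a a list of length n
  (a ! i is a_(i+1), 0-based indexing) and d a natural number.\<close>

definition M :: "nat list \<Rightarrow> (nat list \<times> nat) set" where
  "M lam = {(a, d). length a = length lam \<and>
      (\<Sum>i<length lam. real (a ! i) / real (lam ! i)) \<ge> real d}"

definition vzero :: "nat \<Rightarrow> nat list \<times> nat" where
  "vzero n = (replicate n 0, 0)"

definition vadd :: "nat list \<times> nat \<Rightarrow> nat list \<times> nat \<Rightarrow> nat list \<times> nat" where
  "vadd x y = (map2 (+) (fst x) (fst y), snd x + snd y)"

definition minimal_generator :: "nat list \<Rightarrow> nat list \<times> nat \<Rightarrow> bool" where
  "minimal_generator lam x \<longleftrightarrow>
     x \<in> M lam \<and> x \<noteq> vzero (length lam) \<and>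
     \<not> (\<exists>y z. y \<in> M lam \<and> z \<in> M lam \<and> y \<noteq> vzero (length lam) \<and>
              z \<noteq> vzero (length lam) \<and> x = vadd y z)"

definition gen_type3 :: "nat list \<times> nat \<Rightarrow> bool" where
  "gen_type3 x \<longleftrightarrow> (let a = fst x; d = snd x; n = length a in
     a ! (n - 1) = 0 \<and> d > 0 \<and>
     (\<exists>i j. i < j \<and> j < n - 1 \<and> a ! i * a ! j > 0))"

definition gen_type4 :: "nat list \<times> nat \<Rightarrow> bool" where
  "gen_type4 x \<longleftrightarrow> (let a = fst x; d = snd x; n = length a in
     d > 0 \<and> (\<exists>i. i < n - 1 \<and> a ! i * a ! (n - 1) > 0))"

end

theory Submission
  imports Defs
begin

lemma two_pos:
  assumes "gen_type3 (a, d) \<or> gen_type4 (a, d)"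
  shows "d > 0 \<and> (\<exists>p q. p \<noteq> q \<and> p < length a \<and> q < length a \<and> a ! p > 0 \<and> a ! q > 0)"
proof -
  let ?n = "length a"
  from assms show ?thesis
  proof
    assume "gen_type3 (a, d)"
    then obtain i j where "d > 0" "i < j" "j < ?n - 1" "a ! i * a ! j > 0"
      unfolding gen_type3_def Let_def by auto
    then show ?thesis by (intro conjI exI[of _ i] exI[of _ j]) auto
  next
    assume "gen_type4 (a, d)"
    then obtain i where "d > 0" "i < ?n - 1" "a ! i * a ! (?n - 1) > 0"
      unfolding gen_type4_def Let_def by auto
    then show ?thesis by (intro conjI exI[of _ i] exI[of _ "?n - 1"]) auto
  qed
qed

theorem lemma5p4:
  fixes lam a :: "nat list" and d :: nat
  assumes "\<forall>i < length lam. lam ! i > 0"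
    and "minimal_generator lam (a, d)"
    and "gen_type3 (a, d) \<or> gen_type4 (a, d)"
  shows "\<forall>i < length lam. a ! i < lam ! i"
proof (rule ccontr)
  assume "\<not> (\<forall>i < length lam. a ! i < lam ! i)"
  then obtain k where k: "k < length lam" "a ! k \<ge> lam ! k" by force
  define n where "n = length lam"
  have inM: "(a, d) \<in> M lam" and nosplit: "\<not> (\<exists>y z. y \<in> M lam \<and> z \<in> M lam \<and> y \<noteq> vzero n \<and>
              z \<noteq> vzero n \<and> (a, d) = vadd y z)"
    using assms(2) unfolding minimal_generator_def n_def by blast+
  have len: "length a = n" using inM unfolding M_def n_def by simp
  have sumx: "(\<Sum>i<n. real (a ! i) / real (lam ! i)) \<ge> real d" using inM unfolding M_def n_def by simp
  obtain p q where pq: "d > 0" "p \<noteq> q" "p < n" "q < n" "a ! p > 0" "a ! q > 0"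
    using two_pos[OF assms(3)] len by blast
  obtain r where r: "r \<noteq> k" "r < n" "a ! r > 0" using pq by metis
  have lk: "lam ! k > 0" using assms(1) k by blast
  define ys where "ys = (replicate n 0)[k := lam ! k]"
  define zs where "zs = a[k := a ! k - lam ! k]"
  have kn: "k < n" using k n_def by simp
  have ysn: "\<And>i. i < n \<Longrightarrow> ys ! i = (if i = k then lam ! k else 0)"
    unfolding ys_def using kn by (simp add: nth_list_update)
  have zsn: "\<And>i. i < n \<Longrightarrow> real (zs ! i) = real (a ! i) - (if i = k then real (lam ! k) else 0)"
    unfolding zs_def using kn len k by (simp add: nth_list_update of_nat_diff)
  have yM: "(ys, 1) \<in> M lam"
  proof -
    have "(\<Sum>i<n. real (ys ! i) / real (lam ! i)) = (\<Sum>i<n. if i = k then 1 else 0)"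
      using ysn lk by (intro sum.cong) auto
    also have "\<dots> = 1" using kn by simp
    finally show ?thesis unfolding M_def n_def[symmetric] ys_def by simp
  qed
  have zM: "(zs, d - 1) \<in> M lam"
  proof -
    have "(\<Sum>i<n. real (zs ! i) / real (lam ! i)) =
          (\<Sum>i<n. real (a ! i) / real (lam ! i) - (if i = k then 1 else 0))"
      using zsn lk by (intro sum.cong) (auto simp: diff_divide_distrib)
    also have "\<dots> = (\<Sum>i<n. real (a ! i) / real (lam ! i)) - 1"
      using kn by (simp add: sum_subtractf)
    finally have "(\<Sum>i<n. real (zs ! i) / real (lam ! i)) \<ge> real (d - 1)"
      using sumx pq(1) by (simp add: of_nat_diff)
    then show ?thesis unfolding M_def n_def[symmetric] zs_def using len by simp
  qed
  have yne: "(ys, 1) \<noteq> vzero n" unfolding vzero_def by simp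
  have zne: "(zs, d - 1) \<noteq> vzero n"
  proof
    assume "(zs, d - 1) = vzero n"
    then have "zs ! r = 0" using r unfolding vzero_def by simp
    moreover have "zs ! r = a ! r" unfolding zs_def using r by simp
    ultimately show False using r by simp
  qed
  have "(a, d) = vadd (ys, 1) (zs, d - 1)"
  proof -
    have "map2 (+) ys zs = a"
    proof (rule nth_equalityI)
      show "length (map2 (+) ys zs) = length a" unfolding ys_def zs_def using len by simp
      fix i assume "i < length (map2 (+) ys zs)"
      then have i: "i < n" unfolding ys_def zs_def using len by simp
      show "map2 (+) ys zs ! i = a ! i"
        using i ysn[OF i] k len kn unfolding zs_def ys_def by (auto simp: nth_list_update)
    qed
    then show ?thesis unfolding vadd_def using pq(1) by simp
  qed
  then show False using nosplit yM zM yne zne by blast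
qed

end
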